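(* Let $X$ be a real Banach space, let $A\subset X\times X^*$ be self-cancelling and suppose $A^\vdash$ is monotone. Then $A^\vdash$ is maximal monotone.
   Context: $\langle x,x^*\rangle=x^*(x)$. $A$ is self-cancelling if it is a linear subspace of $X\times X^*$ with $\langle x,x^*\rangle=0$ for all $(x,x^* )\in A$. $B^\vdash=\{(y,y^* )\mid \langle x,y^*\rangle+\langle y,x^*\rangle=0\ \forall (x,x^* )\in B\}$. A set $T\subset X\times X^*$ is monotone if $\langle x-y,x^*-y^*\rangle\ge0$ for all $(x,x^* ),(y,y^* )\in T$, and maximal monotone if it is monotone and not properly contained in any monotone set. *)

theory Defs
  imports "HOL-Analysis.Analysis"
begin

definition pairing :: "'a::real_normed_vector \<Rightarrow> ('a \<Rightarrow>\<^sub>L real) \<Rightarrow> real" where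
  "pairing x xs = blinfun_apply xs x"

definition self_cancelling :: "('a::real_normed_vector \<times> ('a \<Rightarrow>\<^sub>L real)) set \<Rightarrow> bool" where
  "self_cancelling A \<longleftrightarrow> subspace A \<and> (\<forall>(x, xs) \<in> A. pairing x xs = 0)"

definition perp_set :: "('a::real_normed_vector \<times> ('a \<Rightarrow>\<^sub>L real)) set
    \<Rightarrow> ('a \<times> ('a \<Rightarrow>\<^sub>L real)) set" where
  "perp_set B = {(y, ys). \<forall>(x, xs) \<in> B. pairing x ys + pairing y xs = 0}"

definition monotone_set :: "('a::real_normed_vector \<times> ('a \<Rightarrow>\<^sub>L real)) set \<Rightarrow> bool" where
  "monotone_set T \<longleftrightarrow>
     (\<forall>(x, xs) \<in> T. \<forall>(y, ys) \<in> T. pairing (x - y) (xs - ys) \<ge> 0)"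

definition maximal_monotone :: "('a::real_normed_vector \<times> ('a \<Rightarrow>\<^sub>L real)) set \<Rightarrow> bool" where
  "maximal_monotone T \<longleftrightarrow>
     monotone_set T \<and> (\<forall>S. monotone_set S \<and> T \<subseteq> S \<longrightarrow> S = T)"

end

theory Submission
  imports Defs
begin

lemma lin_zero:
  fixes c d :: real
  assumes "\<And>t. c - t * d \<ge> 0"
  shows "d = 0"
proof (rule ccontr)
  assume "d \<noteq> 0"
  have "c - ((c+1)/d) * d \<ge> 0" by (rule assms)
  with \<open>d \<noteq> 0\<close> show False by simp
qed

theorem lemma4:
  fixes A :: "('a::banach \<times> ('a \<Rightarrow>\<^sub>L real)) set"
  assumes "self_cancelling A"
    and "monotone_set (perp_set A)"
  shows "maximal_monotone (perp_set A)"
proof -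
  have sub: "subspace A" and q0: "\<And>x xs. (x, xs) \<in> A \<Longrightarrow> xs x = 0"
    using assms(1) unfolding self_cancelling_def pairing_def by auto
  have AP: "A \<subseteq> perp_set A"
  proof
    fix p assume p: "p \<in> A"
    obtain y ys where [simp]: "p = (y, ys)" by (cases p)
    have "\<forall>(x, xs) \<in> A. xs y + ys x = 0"
    proof clarify
      fix x xs assume xA: "(x, xs) \<in> A"
      have "(x + y, xs + ys) \<in> A" using subspace_add[OF sub xA p[unfolded \<open>p = (y, ys)\<close>]] by simp
      from q0[OF this] q0[OF xA] q0[of y ys] p
      show "xs y + ys x = 0"
        by (simp add: blinfun.add_left blinfun.add_right)
    qed
    then show "p \<in> perp_set A" unfolding perp_set_def pairing_def by auto
  qed
  have "S = perp_set A" if mS: "monotone_set S" and PS: "perp_set A \<subseteq> S" for S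
  proof
    show "S \<subseteq> perp_set A"
    proof
      fix p assume pS: "p \<in> S"
      obtain z zs where [simp]: "p = (z, zs)" by (cases p)
      have "\<forall>(a, as) \<in> A. as z + zs a = 0"
      proof clarify
        fix a as assume aA: "(a, as) \<in> A"
        have "zs z - t * (as z + zs a) \<ge> 0" for t
        proof -
          have "t *\<^sub>R (a, as) \<in> A" using subspace_scale[OF sub aA] .
          hence "(t *\<^sub>R a, t *\<^sub>R as) \<in> S" using AP PS by auto
          hence "pairing (z - t *\<^sub>R a) (zs - t *\<^sub>R as) \<ge> 0"
            using mS pS unfolding monotone_set_def by fastforce
          moreover have "as a = 0" using q0[OF aA] .
          ultimately show ?thesis
            by (simp add: pairing_def blinfun.diff_left blinfun.diff_right
                blinfun.scaleR_left blinfun.scaleR_right algebra_simps)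
        qed
        thus "as z + zs a = 0" by (rule lin_zero)
      qed
      thus "p \<in> perp_set A" unfolding perp_set_def pairing_def by auto
    qed
  qed (rule PS)
  with assms(2) show ?thesis unfolding maximal_monotone_def by blast
qed

end
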